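(* Let $\epsilon>0$ and suppose $h\in\operatorname{Isom}^0(\mathbb{E})$ is an $\epsilon$-hyperbolic affine isometry with linear part $g$. Then for all $\delta>0$ and all $x\in\mathbb{E}$, $$B\!\left(h(x),\frac{\delta\epsilon}{4}\right)\cap E^{wu}_{h(x)}(g)\subset h\big(B(x,\delta)\big).$$
   Context: $\mathbb{R}^{2,1}$ is $\mathbb{R}^3$ with $\mathbb{B}(u,v)=u_1v_1+u_2v_2-u_3v_3$; $\mathbb{E}$ is the affine space modelled on it; $\operatorname{Isom}^0(\mathbb{E})$ consists of maps $x\mapsto gx+b$ with $g\in\mathrm{SO}^0(2,1)$ (the linear part). $\rho$ is Euclidean distance and $B(x,\delta)$ the open Euclidean ball. Let $S^1=\{(\cos\phi,\sin\phi,1)\}$. A hyperbolic $g\in\mathrm{SO}^0(2,1)$ has eigenvalues $\lambda<1<\lambda^{-1}$; $x^-(g)$, $x^+(g)$ are the corresponding eigenvectors on $S^1$, and $x^0(g)$ is the eigenvector for $1$ with $\mathbb{B}(x^0(g),x^0(g))=1$ making $(x^-(g),x^+(g),x^0(g))$ positively oriented. $g$ is $\epsilon$-hyperbolic if $\rho(x^+(g),x^-(g))\ge\epsilon$; an affine isometry is $\epsilon$-hyperbolic if its linear part is. $E^{wu}(g)$ is the linear plane spanned by $x^0(g)$ and $x^+(g)$, and $E^{wu}_y(g)=y+E^{wu}(g)$ for $y\in\mathbb{E}$. *)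

theory Defs
  imports "HOL-Analysis.Analysis"
begin

definition Bform :: "real^3 \<Rightarrow> real^3 \<Rightarrow> real" where
  "Bform u v = u$1 * v$1 + u$2 * v$2 - u$3 * v$3"

text \<open>SO^0(2,1): linear maps (matrices) preserving Bform, of determinant 1, and
  preserving time orientation (identity component).\<close>
definition SO0_21 :: "(real^3^3) set" where
  "SO0_21 = {g. (\<forall>u v. Bform (g *v u) (g *v v) = Bform u v) \<and> det g = 1
              \<and> (g *v vector [0,0,1]) $ 3 > 0}"

definition S1 :: "(real^3) set" where
  "S1 = {vector [cos \<phi>, sin \<phi>, 1] | \<phi>. True}"

definition hyperbolic :: "real^3^3 \<Rightarrow> bool" where
  "hyperbolic g \<longleftrightarrow> g \<in> SO0_21 \<and>
     (\<exists>l. 0 < l \<and> l < 1 \<and> (\<exists>v. v \<noteq> 0 \<and> g *v v = l *\<^sub>R v)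
                         \<and> (\<exists>v. v \<noteq> 0 \<and> g *v v = (1/l) *\<^sub>R v))"

definition xminus :: "real^3^3 \<Rightarrow> real^3" where
  "xminus g = (THE x. x \<in> S1 \<and> (\<exists>l. 0 < l \<and> l < 1 \<and> g *v x = l *\<^sub>R x))"

definition xplus :: "real^3^3 \<Rightarrow> real^3" where
  "xplus g = (THE x. x \<in> S1 \<and> (\<exists>l. 1 < l \<and> g *v x = l *\<^sub>R x))"

definition xzero :: "real^3^3 \<Rightarrow> real^3" where
  "xzero g = (THE x. g *v x = x \<and> Bform x x = 1 \<and>
                     det (vector [xminus g, xplus g, x] :: real^3^3) > 0)"

definition eps_hyperbolic :: "real \<Rightarrow> real^3^3 \<Rightarrow> bool" where
  "eps_hyperbolic \<epsilon> g \<longleftrightarrow> hyperbolic g \<and> dist (xplus g) (xminus g) \<ge> \<epsilon>"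

definition Ewu :: "real^3^3 \<Rightarrow> (real^3) set" where
  "Ewu g = span {xzero g, xplus g}"

definition Ewu_at :: "real^3 \<Rightarrow> real^3^3 \<Rightarrow> (real^3) set" where
  "Ewu_at y g = (\<lambda>v. y + v) ` Ewu g"

end

theory Submission imports Defs begin


lemma Bform_scaleL[simp]: "Bform (a *\<^sub>R u) v = a * Bform u v"
  by (simp add: Bform_def algebra_simps)
lemma Bform_scaleR[simp]: "Bform u (a *\<^sub>R v) = a * Bform u v"
  by (simp add: Bform_def algebra_simps)
lemma Bform_negL[simp]: "Bform (- u) v = - Bform u v"
  by (simp add: Bform_def algebra_simps)
lemma Bform_negR[simp]: "Bform u (- v) = - Bform u v"
  by (simp add: Bform_def algebra_simps)
lemma Bform_addL: "Bform (u + w) v = Bform u v + Bform w v"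
  by (simp add: Bform_def algebra_simps)
lemma Bform_addR: "Bform u (v + w) = Bform u v + Bform u w"
  by (simp add: Bform_def algebra_simps)
lemma Bform_sym: "Bform u v = Bform v u"
  by (simp add: Bform_def algebra_simps)

lemma S1_iff: "x \<in> S1 \<longleftrightarrow> x$3 = 1 \<and> (x$1)^2 + (x$2)^2 = 1"
proof
  assume "x \<in> S1" then show "x$3 = 1 \<and> (x$1)^2 + (x$2)^2 = 1"
    by (auto simp: S1_def)
next
  assume a: "x$3 = 1 \<and> (x$1)^2 + (x$2)^2 = 1"
  then obtain t where "x$1 = cos t" "x$2 = sin t" using sincos_total_2pi by metis
  then have "x = vector [cos t, sin t, 1]" using a by (simp add: vec_eq_iff forall_3)
  then show "x \<in> S1" by (auto simp: S1_def)
qed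

lemma S1_eq: assumes "x \<in> S1" "y \<in> S1" "Bform x y = 0" shows "x = y"
proof -
  have h: "x$3 = 1" "(x$1)^2 + (x$2)^2 = 1" "y$3 = 1" "(y$1)^2 + (y$2)^2 = 1"
    using assms S1_iff by auto
  have "(x$1 - y$1)^2 + (x$2 - y$2)^2 = -2 * Bform x y"
    using h by (simp add: Bform_def power2_eq_square algebra_simps)
  then have "(x$1 - y$1)^2 + (x$2 - y$2)^2 = 0" using assms by simp
  then have "x$1 = y$1" "x$2 = y$2" by (simp_all add: sum_power2_eq_zero_iff)
  then show ?thesis using h by (simp add: vec_eq_iff forall_3)
qed

lemma SO_B: "g \<in> SO0_21 \<Longrightarrow> Bform (g *v u) (g *v v) = Bform u v"
  by (simp add: SO0_21_def)

lemma eig_B0: assumes "g \<in> SO0_21" "g *v x = a *\<^sub>R x" "g *v y = b *\<^sub>R y" "a * b \<noteq> 1"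
  shows "Bform x y = 0"
proof -
  have e1: "Bform (g *v x) (g *v y) = a * b * Bform x y" using assms(2,3) by simp
  have "Bform x y = a * b * Bform x y" using e1 SO_B[OF assms(1), of x y] by metis
  then have "(1 - a * b) * Bform x y = 0" by algebra
  then show ?thesis using assms(4) by simp
qed

lemma normalize_eig: assumes "g \<in> SO0_21" "v \<noteq> 0" "g *v v = m *\<^sub>R v" "m > 0" "m \<noteq> 1"
  shows "\<exists>x\<in>S1. g *v x = m *\<^sub>R x"
proof -
  have "Bform v v = m * m * Bform v v" using SO_B[OF assms(1), of v v] assms(3) by simp
  moreover have "(m - 1) * (m + 1) \<noteq> 0" using assms(4,5) by simp
  ultimately have "(m - 1) * (m + 1) * Bform v v = 0" by algebra
  then have B0: "Bform v v = 0" using \<open>(m - 1) * (m + 1) \<noteq> 0\<close> by simp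
  have v3: "v$3 \<noteq> 0"
  proof
    assume "v$3 = 0"
    then have "(v$1)^2 + (v$2)^2 = 0" using B0 by (simp add: Bform_def power2_eq_square)
    then have "v$1 = 0" "v$2 = 0" by (simp_all add: sum_power2_eq_zero_iff)
    then have "v = 0" using \<open>v$3 = 0\<close> by (simp add: vec_eq_iff forall_3)
    then show False using assms(2) by simp
  qed
  define x where "x = (1 / v$3) *\<^sub>R v"
  have "x$3 = 1" using v3 by (simp add: x_def)
  moreover have "(x$1)^2 + (x$2)^2 = 1"
  proof -
    have "(v$1)^2 + (v$2)^2 = (v$3)^2" using B0 by (simp add: Bform_def power2_eq_square)
    then show ?thesis using v3 by (simp add: x_def power_divide add_divide_distrib[symmetric])
  qed
  ultimately have "x \<in> S1" by (simp add: S1_iff)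
  moreover have "g *v x = m *\<^sub>R x" by (simp add: x_def matrix_vector_mult_scaleR assms(3))
  ultimately show ?thesis by blast
qed



lemma xpm: assumes "hyperbolic g"
  obtains l where "0 < l" "l < 1" "xplus g \<in> S1" "g *v xplus g = (1/l) *\<^sub>R xplus g"
    "xminus g \<in> S1" "g *v xminus g = l *\<^sub>R xminus g"
proof -
  from assms obtain l v w where g: "g \<in> SO0_21" and l: "0 < l" "l < 1"
    and v: "v \<noteq> 0" "g *v v = l *\<^sub>R v" and w: "w \<noteq> 0" "g *v w = (1/l) *\<^sub>R w"
    unfolding hyperbolic_def by blast
  obtain x where x: "x \<in> S1" "g *v x = (1/l) *\<^sub>R x"
    using normalize_eig[OF g w] l by auto
  obtain y where y: "y \<in> S1" "g *v y = l *\<^sub>R y"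
    using normalize_eig[OF g v] l by auto
  have "xplus g = x" unfolding xplus_def
  proof (rule the_equality)
    show "x \<in> S1 \<and> (\<exists>m>1. g *v x = m *\<^sub>R x)" using x l by (auto intro!: exI[of _ "1/l"])
  next
    fix z assume "z \<in> S1 \<and> (\<exists>m>1. g *v z = m *\<^sub>R z)"
    then obtain m where z: "z \<in> S1" "m > 1" "g *v z = m *\<^sub>R z" by auto
    have "m * (1/l) > 1 * 1" using z(2) l by (intro mult_strict_mono) auto
    then have "m * (1/l) \<noteq> 1" by linarith
    then have "Bform z x = 0" using eig_B0[OF g z(3) x(2)] by blast
    then show "z = x" using S1_eq z(1) x(1) by blast
  qed
  moreover have "xminus g = y" unfolding xminus_def
  proof (rule the_equality)
    show "y \<in> S1 \<and> (\<exists>m. 0 < m \<and> m < 1 \<and> g *v y = m *\<^sub>R y)" using y l by auto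
  next
    fix z assume "z \<in> S1 \<and> (\<exists>m. 0 < m \<and> m < 1 \<and> g *v z = m *\<^sub>R z)"
    then obtain m where z: "z \<in> S1" "m > 0" "m < 1" "g *v z = m *\<^sub>R z" by auto
    have "m * l < 1 * 1" using z l by (intro mult_strict_mono) auto
    then have "m * l \<noteq> 1" by linarith
    then have "Bform z y = 0" using eig_B0[OF g z(4) y(2)] by blast
    then show "z = y" using S1_eq z(1) y(1) by blast
  qed
  ultimately show ?thesis using that l x y by auto
qed

definition nv :: "real^3 \<Rightarrow> real^3 \<Rightarrow> real^3" where
  "nv p q = vector [p$2*q$3 - p$3*q$2, p$3*q$1 - p$1*q$3, -(p$1*q$2 - p$2*q$1)]"

lemma nv_orth: "Bform (nv p q) p = 0" "Bform (nv p q) q = 0"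
  by (simp_all add: Bform_def nv_def algebra_simps)

lemma nv_par: assumes "Bform y p = 0" "Bform y q = 0"
  shows "Bform (nv p q) (nv p q) *\<^sub>R y = Bform y (nv p q) *\<^sub>R nv p q"
  using assms unfolding Bform_def nv_def
  apply (simp add: vec_eq_iff forall_3)
  apply (intro conjI)
  apply algebra+
  done

lemma det_nv: "det (vector [q, p, y] :: real^3^3) = - Bform y (nv p q)"
  by (simp add: det_3 Bform_def nv_def algebra_simps)

lemma K_val: assumes "p \<in> S1" "q \<in> S1"
  shows "Bform (nv p q) (nv p q) = ((p$1 - q$1)^2 + (p$2 - q$2)^2)^2 / 4"
proof -
  have h: "p$3 = 1" "(p$1)^2 + (p$2)^2 = 1" "q$3 = 1" "(q$1)^2 + (q$2)^2 = 1"
    using assms S1_iff by auto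
  have "4 * Bform (nv p q) (nv p q) = ((p$1 - q$1)^2 + (p$2 - q$2)^2)^2"
    using h unfolding Bform_def nv_def by simp algebra
  then show ?thesis by simp
qed

lemma row_mult: "(vector [x, y, z] :: real^3^3) ** transpose (A::real^3^3) = (vector [A *v x, A *v y, A *v z] :: real^3^3)"
  unfolding vec_eq_iff matrix_matrix_mult_def matrix_vector_mult_def transpose_def
  by (simp add: sum_3 forall_3)

lemma det_scale_rows: "det (vector [a *\<^sub>R x, b *\<^sub>R y, c *\<^sub>R z] :: real^3^3) = a * b * c * det (vector [x, y, z] :: real^3^3)"
  by (simp add: det_3 algebra_simps)



lemma solve_scale: assumes "(k::real) \<noteq> 0" "k *\<^sub>R y = c *\<^sub>R (n::real^3)" shows "y = (c/k) *\<^sub>R n"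
proof -
  have "y = (1/k) *\<^sub>R (k *\<^sub>R y)" using assms(1) by simp
  also have "\<dots> = (c/k) *\<^sub>R n" unfolding assms(2) by simp
  finally show ?thesis .
qed

lemma xzero_prop:
  assumes g: "g \<in> SO0_21" and l: "0 < l" "l < 1"
    and p: "xplus g \<in> S1" "g *v xplus g = (1/l) *\<^sub>R xplus g"
    and q: "xminus g \<in> S1" "g *v xminus g = l *\<^sub>R xminus g"
    and pq: "xplus g \<noteq> xminus g"
  shows "g *v xzero g = xzero g \<and> Bform (xzero g) (xzero g) = 1"
proof -
  define P where "P = xplus g"
  define Q where "Q = xminus g"
  define n where "n = nv P Q"
  define K where "K = Bform n n"
  have hP: "P$3 = 1" "(P$1)^2 + (P$2)^2 = 1" using p S1_iff P_def by auto
  have hQ: "Q$3 = 1" "(Q$1)^2 + (Q$2)^2 = 1" using q S1_iff Q_def by auto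
  define D where "D = (P$1 - Q$1)^2 + (P$2 - Q$2)^2"
  have "D \<noteq> 0"
  proof
    assume "D = 0"
    then have "P$1 = Q$1" "P$2 = Q$2" unfolding D_def by (simp_all add: sum_power2_eq_zero_iff)
    then have "P = Q" using hP hQ by (simp add: vec_eq_iff forall_3)
    then show False using pq P_def Q_def by simp
  qed
  have K: "K = D^2 / 4" unfolding K_def n_def D_def using K_val p(1) q(1) P_def Q_def by simp
  have "D^2 > 0" using \<open>D \<noteq> 0\<close> by simp
  then have Kpos: "K > 0" using K by linarith
  define m where "m = g *v n"
  have "Bform m P = 0"
  proof -
    have "Bform m (g *v P) = Bform n P" using SO_B[OF g] m_def by simp
    then have "(1/l) * Bform m P = 0" using p(2) P_def nv_orth n_def by simp
    then show ?thesis using l by simp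
  qed
  moreover have "Bform m Q = 0"
  proof -
    have "Bform m (g *v Q) = Bform n Q" using SO_B[OF g] m_def by simp
    then have "l * Bform m Q = 0" using q(2) Q_def nv_orth n_def by simp
    then show ?thesis using l by simp
  qed
  ultimately have "K *\<^sub>R m = Bform m n *\<^sub>R n" using nv_par K_def n_def by simp
  then have mn: "m = (Bform m n / K) *\<^sub>R n" using Kpos solve_scale by simp
  define \<gamma> where "\<gamma> = Bform m n / K"
  define M where "M = (vector [Q, P, n] :: real^3^3)"
  have detM: "det M = - K" unfolding M_def K_def n_def using det_nv by simp
  have "M ** transpose g = (vector [l *\<^sub>R Q, (1/l) *\<^sub>R P, \<gamma> *\<^sub>R n] :: real^3^3)"
    unfolding M_def row_mult using p(2) q(2) P_def Q_def mn m_def \<gamma>_def by simp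
  then have "det M * det g = l * (1/l) * \<gamma> * det M"
    using det_scale_rows det_mul det_transpose M_def by metis
  moreover have "det g = 1" using g by (simp add: SO0_21_def)
  ultimately have "det M = \<gamma> * det M" using l by simp
  then have "\<gamma> = 1" using detM Kpos by simp
  then have gn: "g *v n = n" using mn m_def \<gamma>_def by simp
  define x where "x = (- 1 / sqrt K) *\<^sub>R n"
  have sK: "sqrt K * sqrt K = K" using Kpos by simp
  have gx: "g *v x = x" unfolding x_def by (simp only: matrix_vector_mult_scaleR gn)
  have "Bform x x = K / (sqrt K * sqrt K)" unfolding x_def K_def by simp
  then have Bx: "Bform x x = 1" using sK Kpos by simp
  have "xzero g = x" unfolding xzero_def
  proof (rule the_equality)
    have "det (vector [xminus g, xplus g, x] :: real^3^3) = - Bform x n"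
      using det_nv P_def Q_def n_def by simp
    also have "\<dots> = K / sqrt K" unfolding x_def using K_def by simp
    finally show "g *v x = x \<and> Bform x x = 1 \<and> det (vector [xminus g, xplus g, x] :: real^3^3) > 0"
      using gx Bx Kpos by simp
  next
    fix y assume y: "g *v y = y \<and> Bform y y = 1 \<and> det (vector [xminus g, xplus g, y] :: real^3^3) > 0"
    have gy: "g *v y = 1 *\<^sub>R y" using y by simp
    have "1 * (1/l) \<noteq> 1" "1 * l \<noteq> 1" using l by auto
    then have "Bform y P = 0" "Bform y Q = 0"
      using eig_B0[OF g gy p(2)] eig_B0[OF g gy q(2)] P_def Q_def by auto
    then have Ky: "K *\<^sub>R y = Bform y n *\<^sub>R n" using nv_par K_def n_def by simp
    define \<beta> where "\<beta> = Bform y n"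
    have neg: "\<beta> < 0" using y det_nv[of Q P y] P_def Q_def n_def \<beta>_def by simp
    have e: "Bform (K *\<^sub>R y) (K *\<^sub>R y) = Bform (\<beta> *\<^sub>R n) (\<beta> *\<^sub>R n)"
      unfolding Ky \<beta>_def ..
    have e2: "K * (K * Bform y y) = \<beta> * (\<beta> * Bform n n)" using e by (simp only: Bform_scaleL Bform_scaleR)
    have "K * K = (\<beta> * \<beta>) * K" using e2 y K_def by (simp only: mult_1_right mult.assoc)
    then have "\<beta> * \<beta> = K" using Kpos by auto
    then have "sqrt K = \<bar>\<beta>\<bar>" by (metis real_sqrt_abs2)
    then have "\<beta> = - sqrt K" using neg by simp
    then have "K *\<^sub>R y = (- sqrt K) *\<^sub>R n" using Ky \<beta>_def by simp
    then have "y = (- sqrt K / K) *\<^sub>R n" using Kpos by (intro solve_scale) auto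
    moreover have "- sqrt K / K = - 1 / sqrt K" using sK Kpos by (simp add: field_simps)
    ultimately show "y = x" unfolding x_def by simp
  qed
  then show ?thesis using gx Bx by simp
qed



lemma core:
  fixes c1 b1 c2 b2 u1 u2 t a k s e :: real
  assumes h1: "c1^2+b1^2=1" and h2: "c2^2+b2^2=1" and h3: "u1*c1+u2*b1 - t = 0"
    and h4: "u1*c2+u2*b2 - t = 0" and h5: "u1^2+u2^2-t^2=1"
    and hD: "e^2 \<le> (c1-c2)^2+(b1-b2)^2" and he: "e > 0" and hs: "0 \<le> s" "s \<le> 1"
  shows "e^2*((a*u1+s*k*c1)^2+(a*u2+s*k*b1)^2+(a*t+s*k)^2)
         \<le> 16*((a*u1+k*c1)^2+(a*u2+k*b1)^2+(a*t+k)^2)"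
proof -
  define D where "D = (c1-c2)^2+(b1-b2)^2"
  have h3': "u1*c1+u2*b1=t" and h4': "u1*c2+u2*b2=t" using h3 h4 by auto
  have "D * (t^2*D - 4 + D) = 0" unfolding D_def using h1 h2 h3' h4' h5 by algebra
  moreover have Dpos: "D > 0" using hD he unfolding D_def
    by (smt (verit) zero_less_power)
  ultimately have tD: "t^2*D = 4 - D" by simp
  have "D + ((c1+c2)^2+(b1+b2)^2) = 4" unfolding D_def using h1 h2 by algebra
  then have D4: "D \<le> 4" by (smt (verit) sum_squares_ge_zero zero_le_power2)
  have e4: "e^2 \<le> 4" using hD D4 D_def by simp
  have "e^2 * t^2 \<le> D * t^2" using hD D_def by (simp add: mult_right_mono)
  then have et: "e^2 * t^2 \<le> 4" using tD Dpos by (simp add: mult.commute)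
  define N0 where "N0 = a^2*(1+2*t^2)"
  define N1 where "N1 = (a*u1+k*c1)^2+(a*u2+k*b1)^2+(a*t+k)^2"
  define Ns where "Ns = (a*u1+s*k*c1)^2+(a*u2+s*k*b1)^2+(a*t+s*k)^2"
  have N1e: "N1 = a^2 + 2*(a*t+k)^2" unfolding N1_def using h1 h3' h5 by algebra
  have Nse: "Ns = (1-s)*N0 + s*N1 - s*(1-s)*2*k^2" unfolding Ns_def N0_def N1e
    using h1 h3' h5 by algebra
  have "s*(1-s)*2*k^2 \<ge> 0" using hs by simp
  then have Nsl: "Ns \<le> (1-s)*N0 + s*N1" using Nse by linarith
  have "e^2*N0 = a^2*(e^2 + 2*(e^2*t^2))" unfolding N0_def by (simp add: algebra_simps)
  also have "\<dots> \<le> a^2 * 16" using e4 et by (intro mult_left_mono) auto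
  also have "\<dots> \<le> 16 * N1" using N1e by simp
  finally have A: "e^2*N0 \<le> 16*N1" .
  have "N1 \<ge> 0" unfolding N1_def by simp
  then have B: "e^2*N1 \<le> 16*N1" using e4 by (intro mult_right_mono) auto
  have "e^2*Ns \<le> e^2*((1-s)*N0 + s*N1)" using Nsl by (intro mult_left_mono) auto
  also have "\<dots> = (1-s)*(e^2*N0) + s*(e^2*N1)" by (simp add: algebra_simps)
  also have "\<dots> \<le> (1-s)*(16*N1) + s*(16*N1)"
    using A B hs by (intro add_mono mult_left_mono) auto
  also have "\<dots> = 16*N1" by (simp add: algebra_simps)
  finally show ?thesis unfolding Ns_def N1_def .
qed



lemma norm3_sq: "(norm (v::real^3))^2 = (v$1)^2 + (v$2)^2 + (v$3)^2"
  unfolding power2_norm_eq_inner by (simp add: inner_vec_def sum_3 power2_eq_square)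

theorem mainTheorem4:
  fixes \<epsilon> :: real and g :: "real^3^3" and b :: "real^3" and h :: "real^3 \<Rightarrow> real^3"
  assumes "\<epsilon> > 0"
    and "g \<in> SO0_21"
    and "h = (\<lambda>x. g *v x + b)"
    and "eps_hyperbolic \<epsilon> g"
  shows "\<forall>\<delta>>0. \<forall>x. ball (h x) (\<delta> * \<epsilon> / 4) \<inter> Ewu_at (h x) g \<subseteq> h ` ball x \<delta>"
proof (intro allI impI subsetI)
  fix \<delta> :: real and x y
  assume \<delta>: "\<delta> > 0" and y: "y \<in> ball (h x) (\<delta> * \<epsilon> / 4) \<inter> Ewu_at (h x) g"
  have hyp: "hyperbolic g" and dpq: "dist (xplus g) (xminus g) \<ge> \<epsilon>"
    using assms(4) eps_hyperbolic_def by auto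
  obtain l where l: "0 < l" "l < 1" and p: "xplus g \<in> S1" "g *v xplus g = (1/l) *\<^sub>R xplus g"
    and q: "xminus g \<in> S1" "g *v xminus g = l *\<^sub>R xminus g"
    using xpm[OF hyp] by metis
  define P where "P = xplus g"
  define Q where "Q = xminus g"
  define X where "X = xzero g"
  have pq: "P \<noteq> Q" using dpq assms(1) P_def Q_def by auto
  have X: "g *v X = X" "Bform X X = 1"
    using xzero_prop[OF assms(2) l p q] pq P_def Q_def X_def by auto
  have gX: "g *v X = 1 *\<^sub>R X" using X by simp
  have "1 * (1/l) \<noteq> 1" "1 * l \<noteq> 1" using l by auto
  then have XP: "Bform X P = 0" and XQ: "Bform X Q = 0"
    using eig_B0[OF assms(2) gX p(2)] eig_B0[OF assms(2) gX q(2)] P_def Q_def by auto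
  from y obtain w where w: "w \<in> span {X, P}" "y = h x + w"
    unfolding Ewu_at_def Ewu_def X_def P_def by auto
  then obtain a where "w - a *\<^sub>R X \<in> span {P}" using span_breakdown_eq by blast
  then obtain c where "w - a *\<^sub>R X = c *\<^sub>R P" using span_singleton by blast
  then have wac: "w = a *\<^sub>R X + c *\<^sub>R P" by (simp add: algebra_simps)
  define v where "v = a *\<^sub>R X + (c * l) *\<^sub>R P"
  have hz: "h (x + v) = y"
  proof -
    have "g *v v = a *\<^sub>R X + c *\<^sub>R P"
      unfolding v_def using X(1) p(2) l P_def
      by (simp add: matrix_vector_right_distrib matrix_vector_mult_scaleR)
    then show ?thesis using w(2) wac assms(3) by (simp add: matrix_vector_right_distrib algebra_simps)
  qed
  have nw: "norm w < \<delta> * \<epsilon> / 4" using y w(2) by (simp add: dist_norm)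
  have hP: "P$3 = 1" "(P$1)^2 + (P$2)^2 = 1" using p S1_iff P_def by auto
  have hQ: "Q$3 = 1" "(Q$1)^2 + (Q$2)^2 = 1" using q S1_iff Q_def by auto
  have "\<epsilon>^2 \<le> (dist P Q)^2" using dpq assms(1) P_def Q_def by (intro power_mono) auto
  also have "(dist P Q)^2 = (P$1 - Q$1)^2 + (P$2 - Q$2)^2"
    unfolding dist_norm norm3_sq using hP hQ by simp
  finally have eD: "\<epsilon>^2 \<le> (P$1 - Q$1)^2 + (P$2 - Q$2)^2" .
  have c3: "X$1*P$1 + X$2*P$2 - X$3 = 0" using XP hP unfolding Bform_def by simp
  have c4: "X$1*Q$1 + X$2*Q$2 - X$3 = 0" using XQ hQ unfolding Bform_def by simp
  have c5: "(X$1)^2 + (X$2)^2 - (X$3)^2 = 1" using X(2) unfolding Bform_def by (simp add: power2_eq_square)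
  have "\<epsilon>^2 * (norm v)^2 \<le> 16 * (norm w)^2"
    using core[OF hP(2) hQ(2) c3 c4 c5 eD assms(1), of l a c] l
    unfolding norm3_sq v_def wac using hP by (simp add: algebra_simps)
  also have "\<dots> < 16 * (\<delta> * \<epsilon> / 4)^2"
    using nw by (intro mult_strict_left_mono power_strict_mono) auto
  also have "\<dots> = \<epsilon>^2 * \<delta>^2" by (simp add: power2_eq_square)
  finally have "(norm v)^2 < \<delta>^2" using assms(1) by simp
  then have "norm v < \<delta>" using \<delta> by (smt (verit) power_mono norm_ge_zero)
  then have "x + v \<in> ball x \<delta>" by (simp add: dist_norm)
  then show "y \<in> h ` ball x \<delta>" using hz by (metis image_eqI)
qed

end
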